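(* Let $d\ge2$, $p\ge1$, $k\ge1$. For each integer $m\ge1$, the function $$J_m(T):=N_{\ge m(p-1)+1}(T)\prod_{i=1}^{m-1}N_{\le i(p-1)}(T),\qquad T\in\mathcal{C}_k^{(d)},$$ lies in $\mathrm{span}\{\mathbf{1}_{\mathcal{S}}:\mathcal{S}\text{ a length-}p\text{ shuffle class in }\mathcal{C}_k^{(d)}\}$.
   Context: A $d$-Catalan tree is a rooted planar tree in which each vertex has $0$ or $d$ children; $\mathcal{C}_k^{(d)}$ is the set of those with $k$ internal vertices. $N_j(T)$ is the number of vertices at distance $j$ from the root, $N_{\le q}(T)=\sum_{0\le j\le q}N_j(T)$, $N_{\ge q}(T)=\sum_{j\ge q}N_j(T)$. For a path $(v_0,\dots,v_p)$ ($v_i$ a child of $v_{i-1}$) in $T$, $\mathrm{Sh}(T;v_0,\dots,v_p)$ is the set of trees obtained from $T$ by rearranging the $(d-1)p$ subtrees subtended by the siblings of $v_1,\dots,v_p$ among those positions; such sets are the length-$p$ shuffle classes. *)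

theory Defs
  imports Complex_Main "HOL-Library.Indicator_Function"
begin

text \<open>A rooted planar tree is represented by its set of vertices, each vertex being the
  list of child indices on the path from the root (the root is the empty list).
  The children of vertex v are the vertices v @ [j]; the distance from the root is the
  length of the list.\<close>

definition is_dcat :: "nat \<Rightarrow> nat list set \<Rightarrow> bool" where
  "is_dcat d V \<longleftrightarrow> finite V \<and> [] \<in> V \<and>
     (\<forall>v w. v @ w \<in> V \<longrightarrow> v \<in> V) \<and>
     (\<forall>v\<in>V. (\<forall>j. v @ [j] \<notin> V) \<or> (\<forall>j. v @ [j] \<in> V \<longleftrightarrow> j < d))"

definition internal_vertices :: "nat list set \<Rightarrow> nat list set" where
  "internal_vertices V = {v \<in> V. \<exists>j. v @ [j] \<in> V}"

definition catalan_trees :: "nat \<Rightarrow> nat \<Rightarrow> nat list set set" where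
  "catalan_trees d k = {V. is_dcat d V \<and> card (internal_vertices V) = k}"

definition N_le :: "nat list set \<Rightarrow> nat \<Rightarrow> nat" where
  "N_le V q = card {v \<in> V. length v \<le> q}"

definition N_ge :: "nat list set \<Rightarrow> nat \<Rightarrow> nat" where
  "N_ge V q = card {v \<in> V. q \<le> length v}"

text \<open>Path v_0 = u, v_i = u @ take i cs (i = 0..p), p = length cs.
  The slots are the positions of the siblings of v_1, ..., v_p.\<close>

definition slots :: "nat \<Rightarrow> nat list \<Rightarrow> nat list \<Rightarrow> nat list set" where
  "slots d u cs = {u @ take i cs @ [j] | i j. i < length cs \<and> j < d \<and> j \<noteq> cs ! i}"

definition subtree_at :: "nat list set \<Rightarrow> nat list \<Rightarrow> nat list set" where
  "subtree_at V s = {w. s @ w \<in> V}"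

definition shuffle_class :: "nat \<Rightarrow> nat list set \<Rightarrow> nat list \<Rightarrow> nat list \<Rightarrow> nat list set set" where
  "shuffle_class d V u cs =
     {{x \<in> V. \<not> (\<exists>s\<in>slots d u cs. \<exists>w. x = s @ w)} \<union>
      {s @ w | s w. s \<in> slots d u cs \<and> w \<in> subtree_at V (\<sigma> s)}
      | \<sigma>. bij_betw \<sigma> (slots d u cs) (slots d u cs)}"

definition shuffle_classes :: "nat \<Rightarrow> nat \<Rightarrow> nat \<Rightarrow> nat list set set set" where
  "shuffle_classes d k p =
     {shuffle_class d V u cs | V u cs. V \<in> catalan_trees d k \<and> u \<in> V \<and>
        length cs = p \<and> u @ cs \<in> V}"

definition J_fun :: "nat \<Rightarrow> nat \<Rightarrow> nat list set \<Rightarrow> real" where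
  "J_fun p m V = real (N_ge V (m * (p - 1) + 1)) * (\<Prod>i=1..m-1. real (N_le V (i * (p - 1))))"

end

theory Submission
  imports Defs
begin

definition rebuild :: "nat \<Rightarrow> nat list set \<Rightarrow> nat list \<Rightarrow> nat list \<Rightarrow> (nat list \<Rightarrow> nat list) \<Rightarrow> nat list set" where
  "rebuild d V u cs \<sigma> = {x \<in> V. \<not> (\<exists>s\<in>slots d u cs. \<exists>w. x = s @ w)} \<union>
      {s @ w | s w. s \<in> slots d u cs \<and> w \<in> subtree_at V (\<sigma> s)}"

lemma shuffle_class_alt:
  "shuffle_class d V u cs = {rebuild d V u cs \<sigma> | \<sigma>. bij_betw \<sigma> (slots d u cs) (slots d u cs)}"
  by (simp add: shuffle_class_def rebuild_def)

lemma slot_len: "s \<in> slots d u cs \<Longrightarrow> length s > length u"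
  by (auto simp: slots_def)

lemma slots_prefix:
  assumes "s \<in> slots d u cs" "s' \<in> slots d u cs" "s @ w = s' @ w'" "length s \<le> length s'"
  shows "s = s'"
proof -
  obtain i j where s: "s = u @ take i cs @ [j]" "i < length cs" "j < d" "j \<noteq> cs ! i"
    using assms(1) by (auto simp: slots_def)
  obtain i' j' where s': "s' = u @ take i' cs @ [j']" "i' < length cs" "j' < d" "j' \<noteq> cs ! i'"
    using assms(2) by (auto simp: slots_def)
  have pre: "take (length s) s' = s"
    using assms(3,4) by (metis append_eq_append_conv_if)
  have "i \<le> i'" using assms(4) s s' by simp
  show ?thesis
  proof (cases "i = i'")
    case True
    then show ?thesis using pre s s' by simp
  next
    case False
    then have "i < i'" using \<open>i \<le> i'\<close> by simp
    have "s' ! (length u + i) = cs ! i" using s' \<open>i < i'\<close> by (simp add: nth_append)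
    moreover have "s ! (length u + i) = j" using s by (simp add: nth_append)
    moreover have "s' ! (length u + i) = s ! (length u + i)"
    proof -
      have "length u + i < length s" using s by simp
      then have "take (length s) s' ! (length u + i) = s' ! (length u + i)" by (rule nth_take)
      then show ?thesis using pre by simp
    qed
    ultimately show ?thesis using s by simp
  qed
qed

lemma slots_eq:
  assumes "s \<in> slots d u cs" "s' \<in> slots d u cs" "s @ w = s' @ w'"
  shows "s = s' \<and> w = w'"
proof -
  have "s = s'" using slots_prefix[OF assms] slots_prefix[OF assms(2,1) assms(3)[symmetric]]
    nat_le_linear by metis
  then show ?thesis using assms(3) by simp
qed

lemma rebuild_subtree:
  assumes "s \<in> slots d u cs"
  shows "subtree_at (rebuild d V u cs \<sigma>) s = subtree_at V (\<sigma> s)"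
proof (rule set_eqI)
  fix w
  show "w \<in> subtree_at (rebuild d V u cs \<sigma>) s \<longleftrightarrow> w \<in> subtree_at V (\<sigma> s)"
  proof
    assume "w \<in> subtree_at (rebuild d V u cs \<sigma>) s"
    then have "s @ w \<in> rebuild d V u cs \<sigma>" by (simp add: subtree_at_def)
    then obtain s' w' where "s' \<in> slots d u cs" "w' \<in> subtree_at V (\<sigma> s')" "s @ w = s' @ w'"
      using assms unfolding rebuild_def by blast
    then show "w \<in> subtree_at V (\<sigma> s)" using slots_eq[OF assms] by blast
  next
    assume "w \<in> subtree_at V (\<sigma> s)"
    then show "w \<in> subtree_at (rebuild d V u cs \<sigma>) s"
      using assms unfolding rebuild_def subtree_at_def by blast
  qed
qed

lemma rebuild_out:
  "{x \<in> rebuild d V u cs \<sigma>. \<not> (\<exists>s\<in>slots d u cs. \<exists>w. x = s @ w)} =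
   {x \<in> V. \<not> (\<exists>s\<in>slots d u cs. \<exists>w. x = s @ w)}"
  unfolding rebuild_def by blast

lemma rebuild_rebuild:
  assumes "\<And>s. s \<in> slots d u cs \<Longrightarrow> \<tau> s \<in> slots d u cs"
  shows "rebuild d (rebuild d V u cs \<sigma>) u cs \<tau> = rebuild d V u cs (\<sigma> \<circ> \<tau>)"
proof -
  let ?W = "rebuild d V u cs \<sigma>"
  have 1: "rebuild d ?W u cs \<tau> = {x \<in> ?W. \<not> (\<exists>s\<in>slots d u cs. \<exists>w. x = s @ w)} \<union>
      {s @ w | s w. s \<in> slots d u cs \<and> w \<in> subtree_at ?W (\<tau> s)}"
    by (rule rebuild_def)
  have 2: "{s @ w | s w. s \<in> slots d u cs \<and> w \<in> subtree_at ?W (\<tau> s)} =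
     {s @ w | s w. s \<in> slots d u cs \<and> w \<in> subtree_at V ((\<sigma> \<circ> \<tau>) s)}"
  proof -
    have r: "\<And>s. s \<in> slots d u cs \<Longrightarrow> subtree_at ?W (\<tau> s) = subtree_at V (\<sigma> (\<tau> s))"
      using rebuild_subtree assms by blast
    show ?thesis by (simp add: r cong: conj_cong)
  qed
  show ?thesis unfolding 1 2 rebuild_out by (simp add: rebuild_def)
qed

lemma rebuild_id: "rebuild d V u cs id = V"
  unfolding rebuild_def subtree_at_def by auto

lemma self_mem: "V \<in> shuffle_class d V u cs"
  unfolding shuffle_class_alt using rebuild_id[of d V u cs] bij_betw_id by blast

lemma class_eq:
  assumes "T \<in> shuffle_class d V u cs"
  shows "shuffle_class d T u cs = shuffle_class d V u cs"
proof -
  let ?S = "slots d u cs"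
  obtain \<sigma> where sig: "bij_betw \<sigma> ?S ?S" and T: "T = rebuild d V u cs \<sigma>"
    using assms unfolding shuffle_class_alt by blast
  show ?thesis
  proof
    show "shuffle_class d T u cs \<subseteq> shuffle_class d V u cs"
    proof
      fix X assume "X \<in> shuffle_class d T u cs"
      then obtain \<tau> where tau: "bij_betw \<tau> ?S ?S" and X: "X = rebuild d T u cs \<tau>"
        unfolding shuffle_class_alt by blast
      have "X = rebuild d V u cs (\<sigma> \<circ> \<tau>)"
        unfolding X T by (rule rebuild_rebuild) (use tau in \<open>auto simp: bij_betw_def\<close>)
      moreover have "bij_betw (\<sigma> \<circ> \<tau>) ?S ?S" using bij_betw_trans[OF tau sig] .
      ultimately show "X \<in> shuffle_class d V u cs" unfolding shuffle_class_alt by blast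
    qed
  next
    show "shuffle_class d V u cs \<subseteq> shuffle_class d T u cs"
    proof
      fix X assume "X \<in> shuffle_class d V u cs"
      then obtain \<rho> where rho: "bij_betw \<rho> ?S ?S" and X: "X = rebuild d V u cs \<rho>"
        unfolding shuffle_class_alt by blast
      define \<tau> where "\<tau> = inv_into ?S \<sigma> \<circ> \<rho>"
      have tau: "bij_betw \<tau> ?S ?S" unfolding \<tau>_def
        using bij_betw_trans[OF rho bij_betw_inv_into[OF sig]] .
      have "rebuild d T u cs \<tau> = rebuild d V u cs (\<sigma> \<circ> \<tau>)"
        unfolding T by (rule rebuild_rebuild) (use tau in \<open>auto simp: bij_betw_def\<close>)
      also have "rebuild d V u cs (\<sigma> \<circ> \<tau>) = rebuild d V u cs \<rho>"
      proof -
        have "\<And>s. s \<in> ?S \<Longrightarrow> (\<sigma> \<circ> \<tau>) s = \<rho> s"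
        proof -
          fix s assume "s \<in> ?S"
          then have "\<rho> s \<in> \<sigma> ` ?S" using rho sig by (auto simp: bij_betw_def)
          then show "(\<sigma> \<circ> \<tau>) s = \<rho> s" unfolding \<tau>_def by (simp add: f_inv_into_f)
        qed
        then show ?thesis unfolding rebuild_def by (simp cong: conj_cong)
      qed
      finally show "X \<in> shuffle_class d T u cs" using tau X unfolding shuffle_class_alt by blast
    qed
  qed
qed

lemma path_not_below:
  assumes "s \<in> slots d u cs" "u @ cs = s @ w"
  shows False
proof -
  obtain i j where s: "s = u @ take i cs @ [j]" "i < length cs" "j \<noteq> cs ! i"
    using assms(1) by (auto simp: slots_def)
  have "(u @ cs) ! (length u + i) = cs ! i" by (simp add: nth_append)
  moreover have "(s @ w) ! (length u + i) = j" using s by (simp add: nth_append)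
  ultimately show False using assms(2) s by simp
qed

lemma path_mem:
  assumes "u @ cs \<in> V" "T \<in> shuffle_class d V u cs"
  shows "u @ cs \<in> T"
proof -
  obtain \<sigma> where T: "T = rebuild d V u cs \<sigma>"
    using assms(2) unfolding shuffle_class_alt by blast
  show ?thesis unfolding T rebuild_def using assms(1) path_not_below by blast
qed

lemma Nle_inv:
  assumes "q \<le> length u" "T \<in> shuffle_class d V u cs"
  shows "{v \<in> T. length v \<le> q} = {v \<in> V. length v \<le> q}"
proof -
  obtain \<sigma> where T: "T = rebuild d V u cs \<sigma>"
    using assms(2) unfolding shuffle_class_alt by blast
  have sl: "\<And>s w. s \<in> slots d u cs \<Longrightarrow> \<not> length (s @ w) \<le> q"
    using slot_len assms(1) by fastforce
  show ?thesis unfolding T rebuild_def using sl by blast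
qed

lemma tree_bound:
  assumes "is_dcat d V" "v \<in> V"
  shows "length v \<le> card (internal_vertices V) \<and> set v \<subseteq> {..<d}"
proof -
  have fin: "finite V" and pc: "\<And>a b. a @ b \<in> V \<Longrightarrow> a \<in> V"
    and ch: "\<And>a. a \<in> V \<Longrightarrow> (\<forall>j. a @ [j] \<notin> V) \<or> (\<forall>j. a @ [j] \<in> V \<longleftrightarrow> j < d)"
    using assms(1) unfolding is_dcat_def by blast+
  have step: "take i v @ [v ! i] \<in> V" if "i < length v" for i
  proof -
    have "take i v @ [v ! i] = take (Suc i) v" using that by (simp add: take_Suc_conv_app_nth)
    then show ?thesis using pc[of "take (Suc i) v" "drop (Suc i) v"] assms(2) by simp
  qed
  have inT: "take i v \<in> V" if "i < length v" for i
    using step[OF that] pc by blast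
  have "(\<lambda>i. take i v) ` {..<length v} \<subseteq> internal_vertices V"
    unfolding internal_vertices_def using step inT by blast
  moreover have "inj_on (\<lambda>i. take i v) {..<length v}"
    by (rule inj_onI) (metis length_take lessThan_iff min.absorb4)
  moreover have "finite (internal_vertices V)" using fin unfolding internal_vertices_def by simp
  ultimately have "card {..<length v} \<le> card (internal_vertices V)"
    by (metis card_image card_mono)
  moreover have "v ! i < d" if "i < length v" for i
    using ch[OF inT[OF that]] step[OF that] by blast
  then have "set v \<subseteq> {..<d}" by (auto simp: in_set_conv_nth)
  ultimately show ?thesis by simp
qed

theorem corollary6p3:
  fixes d p k m :: nat
  assumes "d \<ge> 2" and "p \<ge> 1" and "k \<ge> 1" and "m \<ge> 1"
  shows "\<exists>Ss c. finite Ss \<and> Ss \<subseteq> shuffle_classes d k p \<and>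
           (\<forall>T \<in> catalan_trees d k.
              J_fun p m T = (\<Sum>S\<in>Ss. c S * indicator S T))"
proof -
  define L where "L = (m - 1) * (p - 1)"
  have Lp: "L + p = m * (p - 1) + 1"
    proof -
    obtain n q where "m = Suc n" "p = Suc q" using assms(2,4) by (metis Suc_le_D One_nat_def)
    then show ?thesis unfolding L_def by simp
  qed
  define U where "U = {xs. set xs \<subseteq> {..<d} \<and> length xs \<le> k}"
  have finU: "finite U" unfolding U_def by (rule finite_lists_length_le) simp
  have TU: "T \<subseteq> U" if "T \<in> catalan_trees d k" for T
    using that tree_bound unfolding catalan_trees_def U_def by blast
  have fincat: "finite (catalan_trees d k)"
    by (rule finite_subset[of _ "Pow U"]) (use TU finU in auto)
  define Ss where "Ss = shuffle_classes d k p"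
  have finSs: "finite Ss"
  proof (rule finite_subset)
    show "Ss \<subseteq> (\<lambda>(V,u,cs). shuffle_class d V u cs) ` (catalan_trees d k \<times> U \<times> U)"
    proof
      fix S assume "S \<in> Ss"
      then obtain V u cs where S: "S = shuffle_class d V u cs" "V \<in> catalan_trees d k" "u \<in> V"
        "u @ cs \<in> V" unfolding Ss_def shuffle_classes_def by blast
      have "u @ cs \<in> U" using TU S by blast
      then have "u \<in> U" "cs \<in> U" unfolding U_def by auto
      then show "S \<in> (\<lambda>(V,u,cs). shuffle_class d V u cs) ` (catalan_trees d k \<times> U \<times> U)"
        using S TU by force
    qed
    show "finite ((\<lambda>(V,u,cs). shuffle_class d V u cs) ` (catalan_trees d k \<times> U \<times> U))"
      using fincat finU by simp
  qed
  define Pf where "Pf T = (\<Prod>i=1..m-1. real (N_le T (i * (p - 1))))" for T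
  define Cls where "Cls u cs = {shuffle_class d V u cs | V. V \<in> catalan_trees d k \<and> u @ cs \<in> V}" for u cs
  define Paths where "Paths = {(u,cs). length cs = p \<and> L \<le> length u \<and> u @ cs \<in> U}"
  have finP: "finite Paths"
  proof (rule finite_subset)
    show "Paths \<subseteq> U \<times> U" unfolding Paths_def U_def by auto
    show "finite (U \<times> U)" using finU by simp
  qed
  define g where "g x S = (case x of (u,cs) \<Rightarrow> if S \<in> Cls u cs then Pf (SOME T. T \<in> S) else 0)" for x S
  define c where "c S = (\<Sum>x\<in>Paths. g x S)" for S
  have Pf_inv: "Pf X = Pf T" if "X \<in> shuffle_class d T u cs" "L \<le> length u" for X T u cs
  proof -
    have "N_le X (i * (p - 1)) = N_le T (i * (p - 1))" if "i \<in> {1..m-1}" for i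
    proof -
      have "i * (p - 1) \<le> L" using that unfolding L_def by simp
      then show ?thesis unfolding N_le_def using Nle_inv[OF _ \<open>X \<in> shuffle_class d T u cs\<close>]
        \<open>L \<le> length u\<close> by simp
    qed
    then show ?thesis unfolding Pf_def by simp
  qed
  have key: "(\<Sum>S\<in>Ss. g x S * indicator S T) = (case x of (u,cs) \<Rightarrow> if u @ cs \<in> T then Pf T else 0)"
    if T: "T \<in> catalan_trees d k" and x: "x \<in> Paths" for T x
  proof -
    obtain u cs where xe: "x = (u,cs)" and lc: "length cs = p" and Lu: "L \<le> length u"
      using x unfolding Paths_def by blast
    have "(\<Sum>S\<in>Ss. g x S * indicator S T) =
        (\<Sum>S\<in>Ss. if S \<in> Cls u cs \<and> T \<in> S then Pf (SOME T. T \<in> S) else 0)"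
      by (rule sum.cong) (auto simp: g_def xe indicator_def)
    also have "\<dots> = (\<Sum>S\<in>Ss \<inter> {S. S \<in> Cls u cs \<and> T \<in> S}. Pf (SOME T. T \<in> S))"
      using sum.inter_restrict[OF finSs, of "\<lambda>S. Pf (SOME T. T \<in> S)" "{S. S \<in> Cls u cs \<and> T \<in> S}"]
      by simp
    also have "Ss \<inter> {S. S \<in> Cls u cs \<and> T \<in> S} =
        (if u @ cs \<in> T then {shuffle_class d T u cs} else {})"
    proof (cases "u @ cs \<in> T")
      case True
      have "u \<in> T" using True T unfolding catalan_trees_def is_dcat_def by blast
      then have "shuffle_class d T u cs \<in> Ss" unfolding Ss_def shuffle_classes_def
        using T True lc by blast
      moreover have "shuffle_class d T u cs \<in> Cls u cs" unfolding Cls_def using T True by blast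
      moreover have "S = shuffle_class d T u cs" if h: "S \<in> Cls u cs" "T \<in> S" for S
      proof -
        obtain V where "S = shuffle_class d V u cs" using h(1) unfolding Cls_def by blast
        then show ?thesis using class_eq[of T d V u cs] h(2) by simp
      qed
      ultimately have "Ss \<inter> {S. S \<in> Cls u cs \<and> T \<in> S} = {shuffle_class d T u cs}"
        using self_mem[of T d u cs] by blast
      then show ?thesis using True by simp
    next
      case False
      have "\<not> (S \<in> Cls u cs \<and> T \<in> S)" for S
      proof
        assume a: "S \<in> Cls u cs \<and> T \<in> S"
        then obtain V where "S = shuffle_class d V u cs" "u @ cs \<in> V" unfolding Cls_def by blast
        then show False using path_mem[of u cs V T d] a False by simp
      qed
      then show ?thesis using False by auto
    qed
    also have "(\<Sum>S\<in>(if u @ cs \<in> T then {shuffle_class d T u cs} else {}). Pf (SOME T. T \<in> S))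
        = (if u @ cs \<in> T then Pf T else 0)"
    proof (cases "u @ cs \<in> T")
      case True
      have "(SOME X. X \<in> shuffle_class d T u cs) \<in> shuffle_class d T u cs"
        using self_mem by (rule someI)
      then have "Pf (SOME X. X \<in> shuffle_class d T u cs) = Pf T" using Pf_inv Lu by blast
      then show ?thesis using True by simp
    qed simp
    finally show ?thesis using xe by simp
  qed
  have cnt: "N_ge T (L + p) = card {x \<in> Paths. case x of (u,cs) \<Rightarrow> u @ cs \<in> T}"
    if T: "T \<in> catalan_trees d k" for T
  proof -
    have inj: "inj_on (\<lambda>(u,cs). u @ cs) {x \<in> Paths. case x of (u,cs) \<Rightarrow> u @ cs \<in> T}"
    proof (rule inj_onI)
      fix x y assume x: "x \<in> {x \<in> Paths. case x of (u,cs) \<Rightarrow> u @ cs \<in> T}"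
        and y: "y \<in> {x \<in> Paths. case x of (u,cs) \<Rightarrow> u @ cs \<in> T}"
        and e: "(case x of (u,cs) \<Rightarrow> u @ cs) = (case y of (u,cs) \<Rightarrow> u @ cs)"
      obtain a b where xa: "x = (a,b)" "length b = p" using x unfolding Paths_def by blast
      obtain a' b' where ya: "y = (a',b')" "length b' = p" using y unfolding Paths_def by blast
      have "a @ b = a' @ b'" using e xa ya by simp
      then have "a = a' \<and> b = b'" using xa(2) ya(2) append_eq_append_conv
        by (metis length_append add_right_cancel)
      then show "x = y" using xa ya by simp
    qed
    have img: "(\<lambda>(u,cs). u @ cs) ` {x \<in> Paths. case x of (u,cs) \<Rightarrow> u @ cs \<in> T} = {v \<in> T. L + p \<le> length v}"
    proof
      show "(\<lambda>(u,cs). u @ cs) ` {x \<in> Paths. case x of (u,cs) \<Rightarrow> u @ cs \<in> T} \<subseteq> {v \<in> T. L + p \<le> length v}"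
        by (auto simp: Paths_def)
      show "{v \<in> T. L + p \<le> length v} \<subseteq> (\<lambda>(u,cs). u @ cs) ` {x \<in> Paths. case x of (u,cs) \<Rightarrow> u @ cs \<in> T}"
      proof
        fix v assume v: "v \<in> {v \<in> T. L + p \<le> length v}"
        let ?x = "(take (length v - p) v, drop (length v - p) v)"
        have "?x \<in> {x \<in> Paths. case x of (u,cs) \<Rightarrow> u @ cs \<in> T}"
          using v TU[OF T] unfolding Paths_def by auto
        then show "v \<in> (\<lambda>(u,cs). u @ cs) ` {x \<in> Paths. case x of (u,cs) \<Rightarrow> u @ cs \<in> T}"
          by (metis (no_types, lifting) append_take_drop_id case_prod_conv image_eqI)
      qed
    qed
    show ?thesis unfolding N_ge_def using card_image[OF inj] img by simp
  qed
  have main: "J_fun p m T = (\<Sum>S\<in>Ss. c S * indicator S T)" if T: "T \<in> catalan_trees d k" for T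
  proof -
    have "(\<Sum>S\<in>Ss. c S * indicator S T) = (\<Sum>S\<in>Ss. \<Sum>x\<in>Paths. g x S * indicator S T)"
      unfolding c_def by (simp add: sum_distrib_right)
    also have "\<dots> = (\<Sum>x\<in>Paths. \<Sum>S\<in>Ss. g x S * indicator S T)" by (rule sum.swap)
    also have "\<dots> = (\<Sum>x\<in>Paths. case x of (u,cs) \<Rightarrow> if u @ cs \<in> T then Pf T else 0)"
      using key[OF T] by simp
    also have "\<dots> = (\<Sum>x\<in>Paths. if (case x of (u,cs) \<Rightarrow> u @ cs \<in> T) then Pf T else 0)"
      by (rule sum.cong) auto
    also have "\<dots> = (\<Sum>x\<in>{x \<in> Paths. case x of (u,cs) \<Rightarrow> u @ cs \<in> T}. Pf T)"
      by (rule sum.inter_filter[symmetric]) (rule finP)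
    also have "\<dots> = real (N_ge T (L + p)) * Pf T" using cnt[OF T] by simp
    also have "\<dots> = J_fun p m T" unfolding J_fun_def Pf_def Lp by simp
    finally show ?thesis by simp
  qed
  show ?thesis using finSs main unfolding Ss_def by blast
qed

end
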